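(* Let $F\in\Gamma_0^s(\mathbb{R}_+)$ and $a\in(0,1]$, and suppose that $D:=\hat F^a$ is a metric on $[0,+\infty)$. Then there exists $c>0$ such that $F(s)>c|s^a-1|^{1/a}$ for every $s\ge0$, $s\neq1$, and $D$ is a complete metric on $[0,+\infty)$.
   Context: $\Gamma_0(\mathbb{R}_+)$ is the set of functions $F:[0,\infty)\to[0,\infty]$ that are convex, lower semicontinuous, with $F(1)=0$. For $F\in\Gamma_0(\mathbb{R}_+)$: $\mathrm{rec}(F)(r)=\lim_{\alpha\to\infty}F(1+\alpha r)/\alpha$, $F'_\infty:=\mathrm{rec}(F)(1)$; the perspective function is $\hat F(r,t)=tF(r/t)$ for $t>0$, $\hat F(r,0)=\mathrm{rec}(F)(r)$; the reverse entropy is $R(s)=sF(1/s)$ for $s>0$, $R(0)=F'_\infty$. $\Gamma_0^s(\mathbb{R}_+)$ is the set of $F\in\Gamma_0(\mathbb{R}_+)$ with $F=R$; for such $F$, $\hat F$ is symmetric and $\hat F(1,t)=F(t)$. A metric on $[0,\infty)$ is a function $D:[0,\infty)^2\to[0,\infty)$ (finite-valued) with $D(x,y)=0\iff x=y$, symmetric, satisfying the triangle inequality. *)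

theory Defs
  imports "HOL-Analysis.Analysis"
begin

text \<open>Functions F : [0,\<infinity>) \<rightarrow> [0,\<infinity>] are modelled as real \<Rightarrow> ennreal;
  only the values on [0,\<infinity>) matter.\<close>

definition convex_nonneg :: "(real \<Rightarrow> ennreal) \<Rightarrow> bool" where
  "convex_nonneg F \<longleftrightarrow> (\<forall>x y l. 0 \<le> x \<longrightarrow> 0 \<le> y \<longrightarrow> 0 \<le> l \<longrightarrow> l \<le> 1 \<longrightarrow>
      F (l * x + (1 - l) * y) \<le> ennreal l * F x + ennreal (1 - l) * F y)"

definition lsc_nonneg :: "(real \<Rightarrow> ennreal) \<Rightarrow> bool" where
  "lsc_nonneg F \<longleftrightarrow> (\<forall>x. 0 \<le> x \<longrightarrow> F x \<le> Liminf (at x within {0..}) F)"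

definition Gamma0 :: "(real \<Rightarrow> ennreal) set" where
  "Gamma0 = {F. convex_nonneg F \<and> lsc_nonneg F \<and> F 1 = 0}"

definition recF :: "(real \<Rightarrow> ennreal) \<Rightarrow> real \<Rightarrow> ennreal" where
  "recF F r = Lim at_top (\<lambda>\<alpha>::real. F (1 + \<alpha> * r) / ennreal \<alpha>)"

definition Finf :: "(real \<Rightarrow> ennreal) \<Rightarrow> ennreal" where
  "Finf F = recF F 1"

definition persp :: "(real \<Rightarrow> ennreal) \<Rightarrow> real \<Rightarrow> real \<Rightarrow> ennreal" where
  "persp F r t = (if t > 0 then ennreal t * F (r / t) else recF F r)"

definition revF :: "(real \<Rightarrow> ennreal) \<Rightarrow> real \<Rightarrow> ennreal" where
  "revF F s = (if s > 0 then ennreal s * F (1 / s) else Finf F)"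

definition Gamma0s :: "(real \<Rightarrow> ennreal) set" where
  "Gamma0s = {F \<in> Gamma0. \<forall>s\<ge>0. F s = revF F s}"

definition metric_nonneg :: "(real \<Rightarrow> real \<Rightarrow> real) \<Rightarrow> bool" where
  "metric_nonneg D \<longleftrightarrow> (\<forall>x y z. 0 \<le> x \<longrightarrow> 0 \<le> y \<longrightarrow> 0 \<le> z \<longrightarrow>
      0 \<le> D x y \<and> (D x y = 0 \<longleftrightarrow> x = y) \<and> D x y = D y x \<and> D x z \<le> D x y + D y z)"

definition complete_nonneg :: "(real \<Rightarrow> real \<Rightarrow> real) \<Rightarrow> bool" where
  "complete_nonneg D \<longleftrightarrow> (\<forall>u::nat \<Rightarrow> real. (\<forall>n. 0 \<le> u n) \<longrightarrow>
      (\<forall>e>0. \<exists>N. \<forall>m\<ge>N. \<forall>n\<ge>N. D (u m) (u n) < e) \<longrightarrow>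
      (\<exists>x\<ge>0. (\<lambda>n. D (u n) x) \<longlonglongrightarrow> 0))"

end

theory Submission
  imports Defs
begin

theorem mainTheorem6:
  fixes F :: "real \<Rightarrow> ennreal" and a :: real
  assumes "F \<in> Gamma0s"
    and "0 < a" and "a \<le> 1"
    and "\<forall>x y. 0 \<le> x \<longrightarrow> 0 \<le> y \<longrightarrow> persp F x y \<noteq> \<infinity>"
    and "metric_nonneg (\<lambda>x y. enn2real (persp F x y) powr a)"
  shows "(\<exists>c>0. \<forall>s. 0 \<le> s \<longrightarrow> s \<noteq> 1 \<longrightarrow>
            F s > ennreal (c * \<bar>s powr a - 1\<bar> powr (1 / a)))
         \<and> complete_nonneg (\<lambda>x y. enn2real (persp F x y) powr a)"
proof -
  define D where "D = (\<lambda>x y. enn2real (persp F x y) powr a)"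
  have met: "\<And>x y z. 0 \<le> x \<Longrightarrow> 0 \<le> y \<Longrightarrow> 0 \<le> z \<Longrightarrow>
      0 \<le> D x y \<and> (D x y = 0 \<longleftrightarrow> x = y) \<and> D x y = D y x \<and> D x z \<le> D x y + D y z"
    using assms(5) unfolding metric_nonneg_def D_def by blast
  have conv: "convex_nonneg F" and F1: "F 1 = 0"
    using assms(1) unfolding Gamma0s_def Gamma0_def by auto
  have fin: "F t \<noteq> \<infinity>" if "t \<ge> 0" for t
    using assms(4)[rule_format, of t 1] that by (simp add: persp_def)
  define f where "f t = enn2real (F t)" for t
  have Ff: "F t = ennreal (f t)" if "t \<ge> 0" for t
    using fin[OF that] unfolding f_def by (cases "F t") auto
  have fnn: "f t \<ge> 0" for t unfolding f_def by simp
  have f1: "f 1 = 0" using F1 unfolding f_def by simp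
  have Dpos: "D x y = (y * f (x / y)) powr a" if "y > 0" "x \<ge> 0" for x y
  proof -
    have "persp F x y = ennreal (y * f (x/y))"
      using that Ff[of "x/y"] using fnn[of "x/y"] by (simp add: persp_def ennreal_mult)
    thus ?thesis unfolding D_def using that fnn by simp
  qed
  have Dpos': "D x y = y powr a * f (x / y) powr a" if "y > 0" "x \<ge> 0" for x y
    using Dpos[OF that] that fnn by (simp add: powr_mult)
  define f0 where "f0 = f 0"
  have f0pos: "f0 > 0"
  proof -
    have "D 0 1 = f0 powr a" using Dpos[of 1 0] by (simp add: f0_def)
    moreover have "D 0 1 \<noteq> 0" using met[of 0 1 0] by simp
    ultimately show ?thesis using fnn[of 0] f0_def by (auto simp: order_le_less)
  qed
  have D0: "D 0 y = f0 powr a * y powr a" if "y \<ge> 0" for y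
  proof (cases "y = 0")
    case True thus ?thesis using met[of 0 0 0] by simp
  next
    case False thus ?thesis using Dpos'[of y 0] that by (simp add: f0_def)
  qed
  have key: "f s powr a \<ge> f0 powr a * \<bar>s powr a - 1\<bar>" if "s \<ge> 0" for s
  proof -
    have Ds1: "D s 1 = f s powr a" using Dpos'[of 1 s] that by simp
    have t1: "D 0 s \<le> D 0 1 + D 1 s" using met[of 0 1 s] that by simp
    have t2: "D 0 1 \<le> D 0 s + D s 1" using met[of 0 s 1] that by simp
    have "D 1 s = D s 1" using met[of 1 s 0] that by simp
    then show ?thesis using t1 t2 D0[of s] D0[of 1] that Ds1
      by (auto simp: abs_if algebra_simps)
  qed
  have lower: "D x y \<ge> f0 powr a * \<bar>x powr a - y powr a\<bar>" if "x \<ge> 0" "y \<ge> 0" for x y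
  proof (cases "y = 0")
    case True
    then have "D x y = D 0 x" using met[of x 0 0] that by simp
    then show ?thesis using D0[of x] that True by simp
  next
    case False
    then have yp: "y > 0" using that by simp
    have "f0 powr a * \<bar>x powr a - y powr a\<bar> = y powr a * (f0 powr a * \<bar>(x/y) powr a - 1\<bar>)"
    proof -
      have yp': "y powr a > 0" using yp by simp
      have "(x/y) powr a - 1 = (x powr a - y powr a) / y powr a"
        using yp that yp' by (simp add: powr_divide field_simps)
      then have "\<bar>(x/y) powr a - 1\<bar> = \<bar>x powr a - y powr a\<bar> / y powr a"
        using yp' by simp
      then show ?thesis using yp' by simp
    qed
    also have "\<dots> \<le> y powr a * f (x/y) powr a"
      using key[of "x/y"] yp that by (intro mult_left_mono) auto
    finally show ?thesis using Dpos'[OF yp that(1)] by simp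
  qed
  define c where "c = f0 / 2"
  have cpos: "c > 0" using f0pos by (simp add: c_def)
  have part1: "\<forall>s. 0 \<le> s \<longrightarrow> s \<noteq> 1 \<longrightarrow> F s > ennreal (c * \<bar>s powr a - 1\<bar> powr (1 / a))"
  proof (intro allI impI)
    fix s :: real assume s0: "0 \<le> s" and s1: "s \<noteq> 1"
    define A where "A = \<bar>s powr a - 1\<bar>"
    have "s powr a \<noteq> 1"
    proof
      assume h: "s powr a = 1"
      show False
      proof (cases "s = 0")
        case True then show False using h by simp
      next
        case False
        then have "(s powr a) powr (1/a) = s" using s0 assms(2) by (simp add: powr_powr)
        then show False using h s1 by simp
      qed
    qed
    then have Apos: "A > 0" by (simp add: A_def)
    define b where "b = c * A powr (1/a)"
    have b0: "b \<ge> 0" using cpos by (simp add: b_def)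
    have "b powr a = c powr a * A" using cpos Apos assms(2)
      by (simp add: b_def powr_mult powr_powr)
    also have "\<dots> < f0 powr a * A"
      using cpos Apos assms(2) f0pos by (intro mult_strict_right_mono powr_less_mono2) (auto simp: c_def)
    also have "\<dots> \<le> f s powr a" using key[OF s0] by (simp add: A_def)
    finally have lt: "b powr a < f s powr a" .
    have "b < f s"
    proof (rule ccontr)
      assume "\<not> b < f s"
      then have "f s powr a \<le> b powr a" using fnn[of s] assms(2) by (intro powr_mono2) auto
      then show False using lt by simp
    qed
    then show "F s > ennreal (c * \<bar>s powr a - 1\<bar> powr (1 / a))"
      using Ff[OF s0] b0 unfolding b_def A_def by (simp add: ennreal_less_iff)
  qed
  have cv: "F (l * x + (1 - l) * y) \<le> ennreal l * F x + ennreal (1 - l) * F y"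
    if "0 \<le> x" "0 \<le> y" "0 \<le> l" "l \<le> 1" for x y l
    using conv that unfolding convex_nonneg_def by blast
  define K where "K = f 2 + 2 * f (1/2)"
  have loc: "f t \<le> K * \<bar>t - 1\<bar>" if "1/2 \<le> t" "t \<le> 2" for t
  proof (cases "t \<ge> 1")
    case True
    have "F t \<le> ennreal (t-1) * F 2 + ennreal (1 - (t-1)) * F 1"
      using cv[of 2 1 "t-1"] True that by simp
    also have "\<dots> = ennreal ((t-1) * f 2)" using F1 Ff[of 2] True fnn[of 2] by (simp add: ennreal_mult)
    finally have "f t \<le> (t-1) * f 2" using Ff[of t] True fnn[of 2] by simp
    moreover have "(t-1) * f 2 \<le> K * \<bar>t - 1\<bar>" using True fnn[of 2] fnn[of "1/2"]
      mult_nonneg_nonneg[of "f (1/2)" "t-1"] by (simp add: K_def algebra_simps)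
    ultimately show ?thesis by linarith
  next
    case False
    have "F t \<le> ennreal (2*(1-t)) * F (1/2) + ennreal (1 - 2*(1-t)) * F 1"
      using cv[of "1/2" 1 "2*(1-t)"] False that by (simp add: algebra_simps)
    also have "\<dots> = ennreal ((2*(1-t)) * f (1/2))" using F1 Ff[of "1/2"] False fnn[of "1/2"] by (simp add: ennreal_mult)
    finally have "f t \<le> (2*(1-t)) * f (1/2)" using Ff[of t] False that fnn[of "1/2"] by simp
    moreover have "(2*(1-t)) * f (1/2) \<le> K * \<bar>t - 1\<bar>" using False fnn[of 2] fnn[of "1/2"]
      mult_nonneg_nonneg[of "f 2" "1-t"] by (simp add: K_def algebra_simps)
    ultimately show ?thesis by linarith
  qed
  have part2: "complete_nonneg D"
    unfolding complete_nonneg_def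
  proof (intro allI impI)
    fix u :: "nat \<Rightarrow> real"
    assume nn: "\<forall>n. 0 \<le> u n" and cau: "\<forall>e>0. \<exists>N. \<forall>m\<ge>N. \<forall>n\<ge>N. D (u m) (u n) < e"
    define v where "v n = u n powr a" for n
    have f0a: "f0 powr a > 0" using f0pos by simp
    have "Cauchy v"
      unfolding Cauchy_def
    proof (intro allI impI)
      fix e :: real assume e: "e > 0"
      obtain N where N: "\<forall>m\<ge>N. \<forall>n\<ge>N. D (u m) (u n) < e * f0 powr a"
        using cau e f0a by (meson mult_pos_pos)
      show "\<exists>M. \<forall>m\<ge>M. \<forall>n\<ge>M. dist (v m) (v n) < e"
      proof (intro exI allI impI)
        fix m n assume "m \<ge> N" "n \<ge> N"
        then have "f0 powr a * \<bar>v m - v n\<bar> < e * f0 powr a"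
          using N lower[of "u m" "u n"] nn unfolding v_def by fastforce
        then show "dist (v m) (v n) < e" using f0a by (simp add: dist_real_def)
      qed
    qed
    then obtain L where vL: "v \<longlonglongrightarrow> L" using Cauchy_convergent_iff convergent_def by blast
    have L0: "L \<ge> 0" using vL by (rule LIMSEQ_le_const) (auto simp: v_def)
    show "\<exists>x\<ge>0. (\<lambda>n. D (u n) x) \<longlonglongrightarrow> 0"
    proof (cases "L = 0")
      case True
      have "D (u n) 0 = f0 powr a * v n" for n
        using met[of "u n" 0 0] D0[of "u n"] nn unfolding v_def by simp
      moreover have "(\<lambda>n. f0 powr a * v n) \<longlonglongrightarrow> 0"
        using vL True by (simp add: tendsto_mult_right_zero)
      ultimately show ?thesis by auto
    next
      case False
      then have Lp: "L > 0" using L0 by simp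
      define x where "x = L powr (1/a)"
      have xp: "x > 0" using Lp by (simp add: x_def)
      have uv: "u n = v n powr (1/a)" for n
        using nn assms(2) by (cases "u n = 0") (auto simp: v_def powr_powr)
      have ux: "u \<longlonglongrightarrow> x"
        unfolding x_def uv using vL Lp by (intro tendsto_powr) auto
      define w where "w n = u n / x" for n
      have "(\<lambda>n. u n / x) \<longlonglongrightarrow> x / x"
        using xp by (intro tendsto_divide ux tendsto_const) auto
      then have w1: "w \<longlonglongrightarrow> 1" unfolding w_def using xp by simp
      then have ev: "eventually (\<lambda>n. dist (w n) 1 < 1/2) sequentially"
        using tendsto_iff[THEN iffD1, OF w1, rule_format, of "1/2"] by simp
      have K1: "(\<lambda>n. K * \<bar>w n - 1\<bar>) \<longlonglongrightarrow> K * \<bar>1 - 1\<bar>"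
        by (intro tendsto_intros w1)
      have fw: "(\<lambda>n. f (w n)) \<longlonglongrightarrow> 0"
      proof (rule tendsto_sandwich[OF _ _ tendsto_const])
        show "eventually (\<lambda>n. 0 \<le> f (w n)) sequentially" using fnn by simp
        show "eventually (\<lambda>n. f (w n) \<le> K * \<bar>w n - 1\<bar>) sequentially"
          using ev by eventually_elim (intro loc, auto simp: dist_real_def abs_if split: if_splits)
        show "(\<lambda>n. K * \<bar>w n - 1\<bar>) \<longlonglongrightarrow> 0" using K1 by simp
      qed
      have "(\<lambda>n. (x * f (w n)) powr a) \<longlonglongrightarrow> 0"
        using fw xp fnn assms(2)
        by (intro tendsto_zero_powrI[where b=a]) (auto intro: tendsto_mult_right_zero)
      moreover have "D (u n) x = (x * f (w n)) powr a" for n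
        using Dpos[of x "u n"] xp nn unfolding w_def by simp
      ultimately show ?thesis using xp by (intro exI[of _ x]) auto
    qed
  qed
  show ?thesis using part1 part2 cpos unfolding D_def by blast
qed

end
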